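(* Let $p$ be an odd prime. Then the power series \[ \sum_{s=0}^{\infty}\frac{X^{sp}}{(sp)!}\cdot\sum_{r=0}^{\infty}\frac{(-X)^{rp}}{(rp)!}\cdot\sum_{i=1}^{\infty}X^{p^i}\in\mathbb{Q}[[X]] \] has $p$-integral coefficients, and it is congruent to $X^p$ modulo $p$ (i.e. its reduction modulo $p$ in $\mathbb{F}_p[[X]]$ equals $X^p$). *)

theory Defs
  imports "HOL-Computational_Algebra.Computational_Algebra" "HOL-Computational_Algebra.Primes"
begin

definition p_integral :: "nat \<Rightarrow> rat \<Rightarrow> bool" where
  "p_integral p q \<longleftrightarrow> \<not> int p dvd snd (quotient_of q)"

definition exp_p :: "nat \<Rightarrow> rat fps" where
  "exp_p p = Abs_fps (\<lambda>n. if p dvd n then 1 / fact n else 0)"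

definition exp_p_neg :: "nat \<Rightarrow> rat fps" where
  "exp_p_neg p = Abs_fps (\<lambda>n. if p dvd n then (-1) ^ n / fact n else 0)"

definition pow_series :: "nat \<Rightarrow> rat fps" where
  "pow_series p = Abs_fps (\<lambda>n. if \<exists>i\<ge>1. n = p ^ i then 1 else 0)"

end

theory Submission
  imports Defs "HOL-Number_Theory.Residues"
begin

hide_const (open) up_ring.coeff up_ring.monom module.smult


function dsum :: "nat \<Rightarrow> nat \<Rightarrow> nat" where
  "dsum p n = (if p < 2 \<or> n = 0 then 0 else n mod p + dsum p (n div p))"
  by auto
termination by (relation "measure snd") auto

function dfac :: "nat \<Rightarrow> nat \<Rightarrow> nat" where
  "dfac p n = (if p < 2 \<or> n = 0 then 1 else fact (n mod p) * dfac p (n div p))"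
  by auto
termination by (relation "measure snd") auto

declare dsum.simps[simp del] dfac.simps[simp del]

lemma dsum_rec: "p \<ge> 2 \<Longrightarrow> dsum p n = n mod p + dsum p (n div p)"
  by (cases "n = 0") (subst dsum.simps; simp)+

lemma dfac_rec: "p \<ge> 2 \<Longrightarrow> dfac p n = fact (n mod p) * dfac p (n div p)"
  by (cases "n = 0") (subst dfac.simps; simp)+

lemma dsum_0[simp]: "dsum p 0 = 0" by (subst dsum.simps) simp
lemma dfac_0[simp]: "dfac p 0 = 1" by (subst dfac.simps) simp

lemma dsum_mult: "p \<ge> 2 \<Longrightarrow> dsum p (p * n) = dsum p n"
  by (subst dsum_rec) auto
lemma dfac_mult: "p \<ge> 2 \<Longrightarrow> dfac p (p * n) = dfac p n"
  by (subst dfac_rec) auto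

lemma dsum_pos: "p \<ge> 2 \<Longrightarrow> n > 0 \<Longrightarrow> dsum p n > 0"
proof (induction n rule: less_induct)
  case (less n)
  show ?case
  proof (cases "n mod p = 0")
    case True
    then have "n div p > 0" "n div p < n" using less by (auto simp: dvd_imp_le elim!: dvdE)
    then show ?thesis using less dsum_rec[of p n] True by simp
  qed (simp add: dsum_rec[of p n] less)
qed

lemma dsum_pow_mult: "p \<ge> 2 \<Longrightarrow> dsum p (p ^ i * n) = dsum p n"
  by (induction i) (auto simp: dsum_mult mult.assoc)
lemma dfac_pow_mult: "p \<ge> 2 \<Longrightarrow> dfac p (p ^ i * n) = dfac p n"
  by (induction i) (auto simp: dfac_mult mult.assoc)

lemma prime_not_dvd_dfac:
  assumes "prime p" shows "\<not> p dvd dfac p n"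
proof (induction n rule: less_induct)
  case (less n)
  have p2: "p \<ge> 2" using assms prime_ge_2_nat by blast
  show ?case
  proof (cases "n = 0")
    case True then show ?thesis using assms p2 by simp
  next
    case False
    have "\<not> p dvd fact (n mod p)"
      using assms p2 by (simp add: prime_dvd_fact_iff not_le)
    moreover have "\<not> p dvd dfac p (n div p)" using less False p2 by simp
    ultimately show ?thesis using dfac_rec[OF p2, of n] assms prime_dvd_mult_iff by metis
  qed
qed


lemma fact_add_prod: "fact (m + k) = (fact m :: nat) * (\<Prod>j=1..k. m + j)"
proof (induction k)
  case (Suc k)
  have "fact (m + Suc k) = (m + Suc k) * fact (m + k)" by (simp add: fact_Suc)
  also have "\<dots> = fact m * (\<Prod>j=1..Suc k. m + j)" using Suc by (simp add: prod.cl_ivl_Suc algebra_simps)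
  finally show ?case .
qed simp

lemma prod_shift_cong:
  "[(\<Prod>j=1..k. int (p * a + j)) = (\<Prod>j=1..k. int j)] (mod int p)"
proof (rule cong_prod)
  fix j show "[int (p * a + j) = int j] (mod int p)" by (simp add: cong_def)
qed
lemma prod_fact_int: "(\<Prod>j=1..k. int j) = fact k"
  by (simp add: fact_prod)

lemma fact_pa_b:
  assumes "prime p" "b < p"
  shows "\<exists>N. fact (p * a + b) = p ^ a * fact a * N \<and> [int N = (-1) ^ a * fact b] (mod int p)"
  using assms(2)
proof (induction a arbitrary: b)
  case 0
  then show ?case by (auto intro!: exI[of _ "fact b"])
next
  case (Suc a)
  have p2: "p \<ge> 2" using assms prime_ge_2_nat by blast
  obtain N0 where N0: "fact (p * a) = p ^ a * fact a * N0" "[int N0 = (-1) ^ a] (mod int p)"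
  proof -
    have "\<exists>N. fact (p * a + 0) = p ^ a * fact a * N \<and> [int N = (-1) ^ a * fact 0] (mod int p)"
      by (rule Suc.IH) (use p2 in simp)
    then show ?thesis using that by (simp only: add_0_right fact_0 mult_1_right) blast
  qed
  define M1 where "M1 = (\<Prod>j=1..p-1. p * a + j)"
  define M2 where "M2 = (\<Prod>j=1..b. p * Suc a + j)"
  have e1: "fact (p * a + (p - 1)) = fact (p * a) * M1" unfolding M1_def by (rule fact_add_prod)
  have e2: "fact (p * Suc a) = fact (p * a + (p - 1)) * (p * Suc a)"
  proof -
    have h: "p * Suc a = Suc (p * a + (p - 1))" using p2 by simp
    show ?thesis by (simp only: h fact_Suc of_nat_id mult.commute)
  qed
  have e3: "fact (p * Suc a + b) = fact (p * Suc a) * M2" unfolding M2_def by (rule fact_add_prod)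
  have eq: "fact (p * Suc a + b) = p ^ Suc a * fact (Suc a) * (N0 * M1 * M2)"
  proof -
    have "fact (p * Suc a + b) = p ^ a * fact a * N0 * M1 * (p * Suc a) * M2"
      by (simp only: e3 e2 e1 N0(1))
    also have "\<dots> = p ^ Suc a * (Suc a * fact a) * (N0 * M1 * M2)"
      by (simp only: power_Suc mult_ac)
    also have "Suc a * fact a = fact (Suc a)" by (simp add: fact_Suc)
    finally show ?thesis .
  qed
  have c1: "[int M1 = fact (p - 1)] (mod int p)"
    unfolding M1_def of_nat_prod prod_fact_int[symmetric] by (rule prod_shift_cong)
  have c1': "[int M1 = -1] (mod int p)"
    using cong_trans[OF c1 wilson_theorem[OF assms(1)]] .
  have c2: "[int M2 = fact b] (mod int p)"
    unfolding M2_def of_nat_prod prod_fact_int[symmetric] by (rule prod_shift_cong)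
  have "[int N0 * int M1 * int M2 = (-1) ^ a * (-1) * fact b] (mod int p)"
    by (intro cong_mult N0(2) c1' c2)
  then have "[int (N0 * M1 * M2) = (-1) ^ Suc a * fact b] (mod int p)"
    by (simp only: of_nat_mult power_Suc mult_ac mult_minus1 mult_minus1_right)
  with eq show ?case by blast
qed

lemma legendre_mod:
  assumes "prime p"
  shows "\<exists>v w. fact n = p ^ v * w \<and> (p - 1) * v + dsum p n = n
            \<and> [int w = (-1) ^ v * int (dfac p n)] (mod int p)"
proof (induction n rule: less_induct)
  case (less n)
  have p2: "p \<ge> 2" using assms prime_ge_2_nat by blast
  show ?case
  proof (cases "n = 0")
    case True
    have "fact n = p ^ 0 * 1 \<and> (p - 1) * 0 + dsum p n = n \<and> [int 1 = (-1) ^ 0 * int (dfac p n)] (mod int p)"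
      using True by simp
    then show ?thesis by blast
  next
    case False
    define a where "a = n div p"
    define b where "b = n mod p"
    have nab: "n = p * a + b" unfolding a_def b_def by simp
    have "b < p" unfolding b_def using p2 by simp
    then obtain N where N: "fact n = p ^ a * fact a * N" "[int N = (-1) ^ a * fact b] (mod int p)"
      using fact_pa_b[OF assms, of b a] nab by auto
    have "a < n" unfolding a_def using False p2 by simp
    then obtain v w where vw: "fact a = p ^ v * w" "(p - 1) * v + dsum p a = a"
       "[int w = (-1) ^ v * int (dfac p a)] (mod int p)" using less.IH by blast
    have "fact n = p ^ (a + v) * (w * N)" using N(1) vw(1) by (simp add: power_add algebra_simps)
    moreover have "(p - 1) * (a + v) + dsum p n = n"
    proof -
      have "dsum p n = b + dsum p a" using dsum_rec[OF p2, of n] unfolding a_def b_def by simp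
      moreover have "(p - 1) * a + a = p * a" using p2 by (cases p) auto
      ultimately show ?thesis using vw(2) nab by (simp add: add_mult_distrib2)
    qed
    moreover have "[int (w * N) = (-1) ^ (a + v) * int (dfac p n)] (mod int p)"
    proof -
      have "dfac p n = fact b * dfac p a" using dfac_rec[OF p2, of n] unfolding a_def b_def by simp
      moreover have "[int w * int N = ((-1) ^ v * int (dfac p a)) * ((-1) ^ a * fact b)] (mod int p)"
        by (intro cong_mult vw(3) N(2))
      ultimately show ?thesis by (simp only: of_nat_mult power_add mult_ac of_nat_fact)
    qed
    ultimately show ?thesis by blast
  qed
qed



definition digit :: "nat \<Rightarrow> nat \<Rightarrow> nat \<Rightarrow> nat" where
  "digit p i n = n div p ^ i mod p"

lemma sub1_digits:
  assumes p2: "p \<ge> 2" and "n \<ge> 1"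
  shows "dsum p n \<le> dsum p (n - 1) + 1
     \<and> (n mod p \<noteq> 0 \<longrightarrow> dsum p (n - 1) + 1 = dsum p n \<and> dfac p n = (n mod p) * dfac p (n - 1))
     \<and> (n mod p = 0 \<longrightarrow> dsum p n + (p - 1) \<le> dsum p (n - 1) + 1)"
  using assms(2)
proof (induction n rule: less_induct)
  case (less n)
  show ?case
  proof (cases "n mod p = 0")
    case False
    have e: "n - 1 = p * (n div p) + (n mod p - 1)" using False
      by (metis add_diff_assoc div_mult_mod_eq less_one mult.commute not_le)
    have lt: "n mod p - 1 < p" using p2 by (simp add: less_imp_diff_less)
    have m1: "(n - 1) mod p = n mod p - 1" using e lt by (metis mod_mult_self2 mod_less add.commute)
    have d1: "(n - 1) div p = n div p" using e lt p2
      by (metis add.commute div_mult_self2 div_less add_0 not_numeral_le_zero)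
    have ds: "dsum p (n - 1) = (n mod p - 1) + dsum p (n div p)"
      using dsum_rec[OF p2, of "n - 1"] m1 d1 by simp
    have df: "dfac p (n - 1) = fact (n mod p - 1) * dfac p (n div p)"
      using dfac_rec[OF p2, of "n - 1"] m1 d1 by simp
    have f: "fact (n mod p) = (n mod p) * (fact (n mod p - 1) :: nat)"
      using False by (metis fact_nonzero fact_num_eq_if of_nat_id)
    show ?thesis using False ds df f dsum_rec[OF p2, of n] dfac_rec[OF p2, of n] by simp
  next
    case True
    define m where "m = n div p"
    have nm: "n = p * m" using True unfolding m_def by (metis div_mult_mod_eq add_0_right mult.commute)
    have m1: "m \<ge> 1" using nm less.prems by (cases m) auto
    have mlt: "m < n" using nm m1 p2 by simp
    have e: "n - 1 = p * (m - 1) + (p - 1)"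
    proof -
      obtain k where k: "m = Suc k" using m1 by (cases m) auto
      show ?thesis using nm p2 unfolding k by simp
    qed
    have lt: "p - 1 < p" using p2 by simp
    have m2: "(n - 1) mod p = p - 1" using e lt by (metis mod_mult_self2 mod_less add.commute)
    have d2: "(n - 1) div p = m - 1" using e lt p2
      by (metis add.commute div_mult_self2 div_less add_0 not_numeral_le_zero)
    have ds: "dsum p (n - 1) = (p - 1) + dsum p (m - 1)"
      using dsum_rec[OF p2, of "n - 1"] m2 d2 by simp
    have IH: "dsum p m \<le> dsum p (m - 1) + 1" using less.IH[OF mlt m1] by blast
    have "dsum p n = dsum p m" using nm dsum_mult[OF p2] by simp
    then show ?thesis using ds IH True by simp
  qed
qed

lemma subpow_digits:
  assumes p2: "p \<ge> 2" and "p ^ i \<le> n"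
  shows "dsum p n \<le> dsum p (n - p ^ i) + 1
     \<and> (digit p i n \<noteq> 0 \<longrightarrow> dsum p (n - p ^ i) + 1 = dsum p n \<and> dfac p n = digit p i n * dfac p (n - p ^ i))
     \<and> (digit p i n = 0 \<longrightarrow> dsum p n + (p - 1) \<le> dsum p (n - p ^ i) + 1)"
  using assms(2)
proof (induction i arbitrary: n)
  case 0
  then show ?case using sub1_digits[OF p2, of n] by (simp add: digit_def)
next
  case (Suc i)
  define a where "a = n div p"
  define b where "b = n mod p"
  have nab: "n = p * a + b" unfolding a_def b_def by simp
  have blt: "b < p" unfolding b_def using p2 by simp
  have ai: "p ^ i \<le> a" unfolding a_def using Suc.prems p2
    by (metis div_le_mono nonzero_mult_div_cancel_left not_numeral_le_zero power_Suc zero_neq_numeral le_0_eq)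
  have e: "n - p ^ Suc i = p * (a - p ^ i) + b" using nab ai by (simp add: diff_mult_distrib2)
  have m: "(n - p ^ Suc i) mod p = b" using e blt by (metis mod_mult_self2 mod_less add.commute)
  have d: "(n - p ^ Suc i) div p = a - p ^ i" using e blt p2
    by (metis add.commute div_mult_self2 div_less add_0 not_numeral_le_zero)
  have ds1: "dsum p (n - p ^ Suc i) = b + dsum p (a - p ^ i)" using dsum_rec[OF p2, of "n - p ^ Suc i"] m d by simp
  have ds2: "dsum p n = b + dsum p a" using dsum_rec[OF p2, of n] unfolding a_def b_def by simp
  have df1: "dfac p (n - p ^ Suc i) = fact b * dfac p (a - p ^ i)" using dfac_rec[OF p2, of "n - p ^ Suc i"] m d by simp
  have df2: "dfac p n = fact b * dfac p a" using dfac_rec[OF p2, of n] unfolding a_def b_def by simp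
  have dg: "digit p (Suc i) n = digit p i a" unfolding digit_def a_def by (simp add: div_mult2_eq mult.commute)
  show ?case using Suc.IH[OF ai] ds1 ds2 df1 df2 dg by auto
qed

lemma digit_nz_le: "digit p i n \<noteq> 0 \<Longrightarrow> p ^ i \<le> n"
  unfolding digit_def by (metis div_less mod_0 not_le)

lemma dsum_sum_digits:
  assumes p2: "p \<ge> 2" shows "n < p ^ L \<Longrightarrow> dsum p n = (\<Sum>i<L. digit p i n)"
proof (induction L arbitrary: n)
  case 0 then show ?case by simp
next
  case (Suc L)
  have "n div p < p ^ L" using Suc.prems p2
    by (metis div_less_iff_less_mult mult.commute power_Suc zero_less_numeral less_le_trans zero_less_two)
  then have "dsum p (n div p) = (\<Sum>i<L. digit p i (n div p))" by (rule Suc.IH)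
  moreover have "\<And>i. digit p (Suc i) n = digit p i (n div p)"
    unfolding digit_def by (simp add: div_mult2_eq mult.commute)
  moreover have "(\<Sum>i<Suc L. digit p i n) = digit p 0 n + (\<Sum>i<L. digit p (Suc i) n)"
    by (rule sum.lessThan_Suc_shift)
  ultimately show ?case using dsum_rec[OF p2, of n] by (simp add: digit_def)
qed

lemma dsum_pow1: "p \<ge> 2 \<Longrightarrow> dsum p (p ^ k - 1) = k * (p - 1) \<and> dfac p (p ^ k - 1) = fact (p - 1) ^ k"
proof (induction k)
  case 0 then show ?case by simp
next
  case (Suc k)
  have pk: "p ^ k \<ge> 1" using Suc.prems by simp
  have e: "p ^ Suc k - 1 = p * (p ^ k - 1) + (p - 1)" using pk Suc.prems
    by (simp add: diff_mult_distrib2)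
  have lt: "p - 1 < p" using Suc.prems by simp
  have m: "(p ^ Suc k - 1) mod p = p - 1" using e lt by (metis mod_mult_self2 mod_less add.commute)
  have d: "(p ^ Suc k - 1) div p = p ^ k - 1" using e lt Suc.prems
    by (metis add.commute div_mult_self2 div_less add_0 not_numeral_le_zero)
  show ?case using dsum_rec[OF Suc.prems, of "p ^ Suc k - 1"] dfac_rec[OF Suc.prems, of "p ^ Suc k - 1"] m d Suc.IH[OF Suc.prems]
    by simp
qed

lemma dsum_powdiff:
  assumes "p \<ge> 2" "i \<le> j"
  shows "dsum p (p ^ j - p ^ i) = (j - i) * (p - 1)"
proof -
  have "p ^ j - p ^ i = p ^ i * (p ^ (j - i) - 1)"
    using assms by (simp add: diff_mult_distrib2 power_add[symmetric])
  then show ?thesis using dsum_pow_mult[OF assms(1)] dsum_pow1[OF assms(1)] by simp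
qed

lemma dfac_powdiff1:
  assumes "p \<ge> 2"
  shows "dfac p (p ^ Suc i - p ^ i) = fact (p - 1)"
proof -
  have "p ^ Suc i - p ^ i = p ^ i * (p ^ 1 - 1)"
    by (simp add: diff_mult_distrib2 mult.commute)
  then show ?thesis using dfac_pow_mult[OF assms(1)] dsum_pow1[OF assms(1), of 1] by simp
qed


lemma dsum_eq0: "p \<ge> 2 \<Longrightarrow> dsum p n = 0 \<Longrightarrow> n = 0"
  by (rule ccontr) (use dsum_pos[of p n] in simp)

lemma dsum_eq1: "p \<ge> 2 \<Longrightarrow> dsum p n = 1 \<Longrightarrow> \<exists>j. n = p ^ j"
proof (induction n rule: less_induct)
  case (less n)
  have n0: "n \<noteq> 0" using less.prems by (metis dsum_0 zero_neq_one)
  have r: "dsum p n = n mod p + dsum p (n div p)" using dsum_rec[OF less.prems(1)] .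
  show ?case
  proof (cases "n mod p = 0")
    case True
    then have "dsum p (n div p) = 1" using r less.prems by simp
    moreover have "n div p < n" using n0 less.prems by simp
    ultimately obtain j where "n div p = p ^ j" using less.IH less.prems by blast
    then have "n = p ^ Suc j" using True by (metis div_mult_mod_eq add_0_right mult.commute power_Suc)
    then show ?thesis by blast
  next
    case False
    then have "dsum p (n div p) = 0" using r less.prems by simp
    then have "n div p = 0" using dsum_eq0 less.prems by blast
    then have "n < p" using less.prems(1) by (simp add: div_eq_0_iff)
    then have "n = 1" using r less.prems \<open>dsum p (n div p) = 0\<close> by simp
    then show ?thesis by (metis power_0)
  qed
qed



definition sig :: "nat \<Rightarrow> int poly \<Rightarrow> int" where
  "sig p F = (\<Sum>i\<le>degree F. if p dvd i then coeff F i else 0)"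

definition Uq :: "int poly" where "Uq = [:-1, 1:]"

definition tt :: "nat \<Rightarrow> nat \<Rightarrow> int" where "tt p m = sig p (Uq ^ m)"

definition tau :: "nat \<Rightarrow> int poly \<Rightarrow> int" where "tau p f = sig p (pcompose f Uq)"

lemma sig_ext:
  assumes "degree F \<le> N"
  shows "sig p F = (\<Sum>i\<le>N. if p dvd i then coeff F i else 0)"
  unfolding sig_def
  by (rule sum.mono_neutral_left) (use assms in \<open>auto simp: coeff_eq_0\<close>)

lemma sig_add: "sig p (F + G) = sig p F + sig p G"
proof -
  define N where "N = max (degree F) (degree G)"
  have "degree (F + G) \<le> N" unfolding N_def by (rule degree_add_le) auto
  then show ?thesis
    using sig_ext[of F N p] sig_ext[of G N p] sig_ext[of "F + G" N p]
    by (simp add: N_def sum.distrib[symmetric] if_distrib cong: if_cong)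
qed

lemma sig_smult: "sig p (smult a F) = a * sig p F"
proof -
  have "degree (smult a F) \<le> degree F" by (rule degree_smult_le)
  then show ?thesis using sig_ext[of "smult a F" "degree F" p]
    by (simp add: sig_def sum_distrib_left if_distrib cong: if_cong)
qed

lemma sig_0[simp]: "sig p 0 = 0" by (simp add: sig_def)

lemma sig_minus: "sig p (- F) = - sig p F"
  using sig_smult[of p "-1" F] by simp

lemma sig_diff: "sig p (F - G) = sig p F - sig p G"
  using sig_add[of p F "-G"] sig_minus[of p G] by simp

lemma sig_sum: "sig p (\<Sum>x\<in>A. f x) = (\<Sum>x\<in>A. sig p (f x))"
  by (induction A rule: infinite_finite_induct) (auto simp: sig_add)

lemma sum_split_shift: "(\<Sum>i\<le>N + p. g i) = (\<Sum>i<p. g i) + (\<Sum>i\<le>N. g (i + p :: nat)) "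
  by (induction N) (auto simp: lessThan_Suc_atMost[symmetric] add.commute add.left_commute)

lemma sig_xp:
  assumes "p \<ge> 1"
  shows "sig p (monom 1 p * F) = sig p F"
proof -
  have "degree (monom 1 p * F) \<le> degree F + p"
    by (metis add.commute degree_monom_le degree_mult_le le_trans add_le_mono order_refl)
  then have "sig p (monom 1 p * F) = (\<Sum>i\<le>degree F + p. if p dvd i then coeff (monom 1 p * F) i else 0)"
    by (rule sig_ext)
  also have "\<dots> = (\<Sum>i<p. if p dvd i then coeff (monom 1 p * F) i else 0)
     + (\<Sum>i\<le>degree F. if p dvd (i + p) then coeff (monom 1 p * F) (i + p) else 0)"
    by (rule sum_split_shift)
  also have "(\<Sum>i<p. if p dvd i then coeff (monom 1 p * F) i else 0) = 0"
    by (intro sum.neutral) (auto simp: coeff_monom_mult)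
  also have "(\<Sum>i\<le>degree F. if p dvd (i + p) then coeff (monom 1 p * F) (i + p) else 0) = sig p F"
    unfolding sig_def by (intro sum.cong) (auto simp: coeff_monom_mult)
  finally show ?thesis by simp
qed

lemma pcompose_power': "pcompose (q ^ n) r = (pcompose q r) ^ n"
  by (induction n) (auto simp: pcompose_mult pcompose_1)

definition Phi :: "nat \<Rightarrow> int poly" where "Phi p = [:1, 1:] ^ p - 1"

lemma pcompose_Phi: "pcompose (Phi p) Uq = monom 1 p - 1"
proof -
  have "pcompose [:1, 1:] Uq = [:0, 1:]" by (simp add: Uq_def pcompose_pCons)
  then show ?thesis unfolding Phi_def
    by (simp add: pcompose_diff pcompose_power' pcompose_1 monom_altdef)
qed

lemma tau_add: "tau p (f + g) = tau p f + tau p g"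
  unfolding tau_def by (simp add: pcompose_add sig_add)
lemma tau_smult: "tau p (smult a f) = a * tau p f"
  unfolding tau_def by (simp add: pcompose_smult sig_smult)
lemma tau_diff: "tau p (f - g) = tau p f - tau p g"
  unfolding tau_def by (simp add: pcompose_diff sig_diff)
lemma tau_sum: "tau p (\<Sum>x\<in>A. f x) = (\<Sum>x\<in>A. tau p (f x))"
  unfolding tau_def by (simp add: pcompose_sum sig_sum)

lemma tau_Phi:
  assumes "p \<ge> 1" shows "tau p (f * Phi p) = 0"
proof -
  have "pcompose (f * Phi p) Uq = monom 1 p * pcompose f Uq - pcompose f Uq"
    by (simp add: pcompose_mult pcompose_Phi algebra_simps)
  then show ?thesis unfolding tau_def using sig_xp[OF assms] by (simp add: sig_diff)
qed

lemma tau_monom: "tau p (monom a j) = a * tt p j"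
  unfolding tau_def tt_def
  by (simp add: monom_altdef pcompose_smult pcompose_power' sig_smult pcompose_pCons)

lemma tau_expand:
  assumes "degree f \<le> N"
  shows "tau p f = (\<Sum>j\<le>N. coeff f j * tt p j)"
proof -
  have "f = (\<Sum>j\<le>N. monom (coeff f j) j)"
    using assms by (metis poly_as_sum_of_monoms')
  then have "tau p f = (\<Sum>j\<le>N. tau p (monom (coeff f j) j))"
    by (metis tau_sum)
  then show ?thesis by (simp add: tau_monom)
qed

lemma tt_0: "tt p 0 = 1" by (simp add: tt_def sig_def)

lemma tt_small:
  assumes "j < p"
  shows "tt p j = (-1) ^ j"
proof -
  have deg: "degree (Uq ^ j) = j" unfolding Uq_def
    using degree_linear_power[of "-1" j] by simp
  have z: "i = 0" if "i \<le> j" "p dvd i" for i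
  proof (rule ccontr)
    assume "i \<noteq> 0"
    then have "p \<le> i" using dvd_imp_le[OF that(2)] by simp
    then show False using that(1) assms by simp
  qed
  have "tt p j = (\<Sum>i\<le>j. if i = 0 then coeff (Uq ^ j) 0 else 0)"
    unfolding tt_def sig_def deg
    by (intro sum.cong refl) (use z in auto)
  also have "\<dots> = coeff (Uq ^ j) 0" by simp
  also have "\<dots> = (-1) ^ j" unfolding Uq_def
    using coeff_linear_poly_power[of 0 j "-1::int" 1] by simp
  finally show ?thesis .
qed



definition gp :: "nat \<Rightarrow> int poly" where
  "gp p = (\<Sum>k<p-1. monom (int (p choose (k+1)) div int p) k)"

lemma coeff_gp: "coeff (gp p) i = (if i < p - 1 then int (p choose (i+1)) div int p else 0)"
  unfolding gp_def coeff_sum by (simp add: coeff_monom)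

definition Xp :: "int poly" where "Xp = monom 1 1"

lemma Phi_eq:
  assumes "prime p"
  shows "Phi p = monom 1 p + smult (int p) (Xp * gp p)"
proof (rule poly_eqI)
  fix k
  have p2: "p \<ge> 2" using assms prime_ge_2_nat by blast
  have degL: "degree ([:1, 1:] ^ p :: int poly) = p" using degree_linear_power[of 1 p] by simp
  have cL: "coeff ([:1, 1:] ^ p :: int poly) k = (if k \<le> p then int (p choose k) else 0)"
  proof (cases "k \<le> p")
    case True then show ?thesis using coeff_linear_poly_power[OF True, of "1::int" 1] by simp
  next
    case False then show ?thesis using degL by (simp add: coeff_eq_0)
  qed
  have cR: "coeff (smult (int p) (Xp * gp p)) k = (if k = 0 then 0 else int p * coeff (gp p) (k - 1))"
    unfolding Xp_def by (simp add: coeff_monom_mult)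
  show "coeff (Phi p) k = coeff (monom 1 p + smult (int p) (Xp * gp p)) k"
  proof -
    consider "k = 0" | "0 < k" "k < p" | "k = p" | "p < k" by linarith
    then show ?thesis
    proof cases
      case 1 then show ?thesis unfolding Phi_def using cL cR p2 by simp
    next
      case 2
      have "p dvd (p choose k)" using dvd_choose_prime[of k p] 2 assms by auto
      then have "int p dvd int (p choose k)" by simp
      then have "int p * (int (p choose k) div int p) = int (p choose k)" by simp
      then show ?thesis unfolding Phi_def using cL cR 2 by (simp add: coeff_gp)
    next
      case 3 then show ?thesis unfolding Phi_def using cL cR p2 by (simp add: coeff_gp)
    next
      case 4 then show ?thesis unfolding Phi_def using cL cR p2 by (simp add: coeff_gp)
    qed
  qed
qed

lemma tt_key:
  assumes "prime p" "k0 \<ge> 1" "m = k0 + (p - 1) * q"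
  shows "tt p m = (- int p) ^ q * tau p (monom 1 k0 * gp p ^ q)"
proof -
  have p2: "p \<ge> 2" using assms prime_ge_2_nat by blast
  define g where "g = gp p"
  define a where "a = (monom 1 (p - 1) :: int poly)"
  define b where "b = - smult (int p) g"
  obtain S where S: "a ^ q - b ^ q = (a - b) * S"
    using power_diff_sumr2[of a q b] by blast
  have xa1: "Xp * (a - b) = Xp * a + smult (int p) (Xp * g)"
    unfolding b_def by (simp add: ring_distribs)
  have xa2: "Xp * a = monom 1 p" unfolding Xp_def a_def using p2 by (simp add: mult_monom)
  have xa: "Xp * (a - b) = Phi p"
    unfolding Phi_eq[OF assms(1)] xa1 xa2 g_def ..
  have mm: "monom 1 m = monom 1 k0 * a ^ q"
    unfolding a_def assms(3) by (simp add: monom_power mult_monom mult.commute)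
  have mk: "monom (1::int) k0 = monom 1 (k0 - 1) * Xp"
    unfolding Xp_def using assms(2) by (simp add: mult_monom)
  have "monom 1 m - monom 1 k0 * b ^ q = monom 1 k0 * (a ^ q - b ^ q)"
    unfolding mm by (simp only: right_diff_distrib)
  also have "\<dots> = monom 1 (k0 - 1) * (Xp * (a - b)) * S"
    unfolding S mk by (simp only: mult.assoc)
  also have "\<dots> = monom 1 (k0 - 1) * S * Phi p"
    unfolding xa by (simp only: mult_ac)
  finally have "monom 1 m - monom 1 k0 * b ^ q = monom 1 (k0 - 1) * S * Phi p" .
  then have "tau p (monom 1 m) - tau p (monom 1 k0 * b ^ q) = 0"
    using tau_Phi[of p "monom 1 (k0 - 1) * S"] p2 by (simp add: tau_diff[symmetric])
  moreover have "b ^ q = smult ((- int p) ^ q) (g ^ q)"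
    unfolding b_def by (simp add: smult_power[symmetric])
  ultimately show ?thesis using tau_monom[of p 1 m]
    by (simp add: tau_smult[symmetric] g_def mult_smult_right)
qed

lemma tt_dvd:
  assumes "prime p" "j \<ge> p"
  shows "int p dvd tt p j"
proof -
  have p2: "p \<ge> 2" using assms prime_ge_2_nat by blast
  have "tau p (monom 1 (j - p) * Phi p) = 0" using tau_Phi p2 by simp
  moreover have "monom 1 (j - p) * Phi p = monom 1 j + smult (int p) (monom 1 (j - p) * Xp * gp p)"
    unfolding Phi_eq[OF assms(1)] using assms(2) by (simp add: ring_distribs mult_monom mult_smult_right mult.assoc)
  ultimately have "tt p j + int p * tau p (monom 1 (j - p) * Xp * gp p) = 0"
    by (simp add: tau_add tau_smult tau_monom)
  then have "tt p j = - (int p * tau p (monom 1 (j - p) * Xp * gp p))" by linarith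
  then show ?thesis by simp
qed

lemma tau_mod:
  assumes "prime p" "k0 \<ge> 1"
  shows "[tau p (monom 1 k0 * h) = (\<Sum>j\<in>{k0..<p}. coeff h (j - k0) * (-1) ^ j)] (mod int p)"
proof -
  define f where "f = monom 1 k0 * h"
  define N where "N = degree f + p"
  have "tau p f = (\<Sum>j\<le>N. coeff f j * tt p j)" by (rule tau_expand) (simp add: N_def)
  moreover have "[(\<Sum>j\<le>N. coeff f j * tt p j) = (\<Sum>j\<le>N. if k0 \<le> j \<and> j < p then coeff h (j - k0) * (-1) ^ j else 0)] (mod int p)"
  proof (rule cong_sum)
    fix j assume "j \<in> {..N}"
    show "[coeff f j * tt p j = (if k0 \<le> j \<and> j < p then coeff h (j - k0) * (-1) ^ j else 0)] (mod int p)"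
    proof (cases "j < p")
      case True
      then show ?thesis unfolding f_def using tt_small[OF True] by (simp add: coeff_monom_mult)
    next
      case False
      then have "int p dvd tt p j" using tt_dvd[OF assms(1)] by simp
      then show ?thesis using False by (simp add: cong_0_iff)
    qed
  qed
  moreover have "(\<Sum>j\<le>N. if k0 \<le> j \<and> j < p then coeff h (j - k0) * (-1) ^ j else 0)
      = (\<Sum>j\<in>{k0..<p}. coeff h (j - k0) * (-1) ^ j)"
  proof -
    have "{x \<in> {..N}. k0 \<le> x \<and> x < p} = {k0..<p}" unfolding N_def by auto
    then show ?thesis by (simp add: sum.inter_filter[symmetric])
  qed
  ultimately show ?thesis unfolding f_def by simp
qed



lemma binom_alt:
  assumes "prime p" "i < p"
  shows "[(-1) ^ i * int ((p - 1) choose i) = 1] (mod int p)"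
  using assms(2)
proof (induction i)
  case 0 then show ?case by simp
next
  case (Suc i)
  have p2: "p \<ge> 2" using assms prime_ge_2_nat by blast
  have "p dvd (p choose Suc i)" using dvd_choose_prime[of "Suc i" p] Suc.prems assms by auto
  moreover have "p choose Suc i = ((p - 1) choose i) + ((p - 1) choose Suc i)"
    using binomial_Suc_Suc[of "p - 1" i] p2 by simp
  ultimately have "[int ((p - 1) choose Suc i) = - int ((p - 1) choose i)] (mod int p)"
    by (metis cong_0_iff cong_add_lcancel_0 cong_sym int_dvd_int_iff of_nat_add add.commute
        add_uminus_conv_diff cong_iff_dvd_diff diff_minus_eq_add)
  then have "[(-1) ^ Suc i * int ((p - 1) choose Suc i) = (-1) ^ Suc i * - int ((p - 1) choose i)] (mod int p)"
    by (rule cong_scalar_left)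
  moreover have "(-1) ^ Suc i * - int ((p - 1) choose i) = (-1) ^ i * int ((p - 1) choose i)" by simp
  ultimately show ?case using Suc.IH Suc.prems cong_trans by fastforce
qed

lemma coeff_gp_times:
  assumes "prime p" "i < p - 1"
  shows "int (i + 1) * coeff (gp p) i = int ((p - 1) choose i)"
proof -
  have p2: "p \<ge> 2" using assms prime_ge_2_nat by blast
  have "p dvd (p choose (i + 1))" using dvd_choose_prime[of "i + 1" p] assms by auto
  then obtain c where c: "p choose (i + 1) = p * c" by blast
  have "(i + 1) * (p choose (i + 1)) = p * ((p - 1) choose i)"
    using times_binomial_minus1_eq[of "i + 1" p] by simp
  then have "(i + 1) * (p * c) = p * ((p - 1) choose i)" unfolding c .
  then have "p * ((i + 1) * c) = p * ((p - 1) choose i)" by (metis mult.left_commute)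
  then have "(i + 1) * c = (p - 1) choose i" using p2 by simp
  moreover have "coeff (gp p) i = int c" using c p2 assms(2) by (simp add: coeff_gp)
  ultimately show ?thesis by (metis of_nat_mult)
qed

lemma deriv_identity:
  fixes h :: "int poly"
  assumes "E \<ge> 1"
  shows "int (q + 1) * coeff (h ^ q * pderiv (Xp * h)) E = int (q + 1 + E) * coeff (h ^ (q + 1)) E"
proof -
  have D: "pderiv (Xp * h) = Xp * pderiv h + h"
    unfolding Xp_def by (simp add: pderiv_mult pderiv_monom)
  have e1: "h ^ q * pderiv (Xp * h) = h ^ (q + 1) + Xp * (h ^ q * pderiv h)"
    unfolding D by (simp add: algebra_simps)
  have cx: "coeff (Xp * F) E = coeff F (E - 1)" for F :: "int poly"
    unfolding Xp_def using assms by (simp add: coeff_monom_mult)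
  have "pderiv (h ^ (q + 1)) = smult (of_nat (q + 1)) (h ^ q * pderiv h)"
    using pderiv_power[of h "q + 1"] by simp
  then have "coeff (pderiv (h ^ (q + 1))) (E - 1) = int (q + 1) * coeff (h ^ q * pderiv h) (E - 1)"
    by simp
  moreover have "coeff (pderiv (h ^ (q + 1))) (E - 1) = int E * coeff (h ^ (q + 1)) E"
    using assms by (simp add: coeff_pderiv)
  ultimately have "int (q + 1) * coeff (h ^ q * pderiv h) (E - 1) = int E * coeff (h ^ (q + 1)) E" by simp
  then show ?thesis unfolding e1 by (simp add: cx algebra_simps)
qed



lemma residue:
  assumes "prime p" "1 \<le> k0" "k0 + 2 \<le> p" "q mod p = k0"
  shows "int p dvd (\<Sum>j\<in>{k0..<p}. coeff (gp p ^ q) (j - k0) * (-1) ^ j)"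
proof -
  define E where "E = p - 1 - k0"
  have E1: "E \<ge> 1" using assms unfolding E_def by simp
  define g where "g = gp p"
  define h where "h = pcompose g (monom (-1) 1)"
  have ch: "coeff (h ^ n) i = (-1) ^ i * coeff (g ^ n) i" for n i
    unfolding h_def pcompose_power'[symmetric] by simp
  have sum1: "(\<Sum>j\<in>{k0..<p}. coeff (g ^ q) (j - k0) * (-1) ^ j) = (-1) ^ k0 * (\<Sum>i\<le>E. coeff (h ^ q) i)"
  proof -
    have "{k0..<p} = {0 + k0..<(E + 1) + k0}" unfolding E_def using assms by auto
    then have "(\<Sum>j\<in>{k0..<p}. coeff (g ^ q) (j - k0) * (-1) ^ j)
        = (\<Sum>i\<in>{0..<E + 1}. coeff (g ^ q) (i + k0 - k0) * (-1) ^ (i + k0))"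
      by (simp only: sum.shift_bounds_nat_ivl)
    also have "\<dots> = (\<Sum>i\<le>E. (-1) ^ k0 * coeff (h ^ q) i)"
      by (intro sum.cong) (auto simp: ch power_add atLeast0LessThan lessThan_Suc_atMost[symmetric])
    finally show ?thesis by (simp add: sum_distrib_left)
  qed
  define D where "D = pderiv (Xp * h)"
  have cD: "[coeff D i = 1] (mod int p)" if "i < p - 1" for i
  proof -
    have "coeff D i = int (Suc i) * coeff h i"
      unfolding D_def Xp_def by (simp add: coeff_pderiv coeff_monom_mult)
    also have "\<dots> = (-1) ^ i * (int (i + 1) * coeff g i)"
      using ch[of 1 i] by simp
    also have "\<dots> = (-1) ^ i * int ((p - 1) choose i)"
      unfolding g_def using coeff_gp_times[OF assms(1) that] by simp
    finally show ?thesis using binom_alt[OF assms(1)] that by simp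
  qed
  define Y where "Y = coeff (h ^ q * D) E"
  have "Y = (\<Sum>i\<le>E. coeff (h ^ q) i * coeff D (E - i))" unfolding Y_def by (simp add: coeff_mult)
  moreover have "[(\<Sum>i\<le>E. coeff (h ^ q) i * coeff D (E - i)) = (\<Sum>i\<le>E. coeff (h ^ q) i * 1)] (mod int p)"
    by (intro cong_sum cong_scalar_left cD) (use assms in \<open>auto simp: E_def\<close>)
  ultimately have YS: "[Y = (\<Sum>i\<le>E. coeff (h ^ q) i)] (mod int p)" by simp
  have id: "int (q + 1) * Y = int (q + 1 + E) * coeff (h ^ (q + 1)) E"
    unfolding Y_def D_def by (rule deriv_identity[OF E1])
  define t where "t = q div p"
  have qt: "q = p * t + k0" unfolding t_def using assms(4) by (metis div_mult_mod_eq mult.commute)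
  have "q + 1 + E = p * (t + 1)" unfolding qt E_def using assms by simp
  then have "int p dvd int (q + 1) * Y" using id by (metis dvd_triv_left of_nat_mult mult.assoc)
  moreover have "\<not> int p dvd int (q + 1)"
  proof
    assume "int p dvd int (q + 1)"
    then have "p dvd q + 1" using int_dvd_int_iff by blast
    then have "(q + 1) mod p = 0" by simp
    moreover have "(q + 1) mod p = k0 + 1" unfolding qt using assms by simp
    ultimately show False by simp
  qed
  moreover have "prime (int p)" using assms(1) by simp
  ultimately have "int p dvd Y" using prime_dvd_mult_iff by blast
  then have "int p dvd (\<Sum>i\<le>E. coeff (h ^ q) i)" using YS by (simp add: cong_dvd_iff)
  then show ?thesis unfolding g_def[symmetric] sum1 by simp
qed



lemma tt_main:
  assumes "prime p" "odd p" "m \<ge> 1" "p dvd m"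
  shows "\<exists>v w T. fact m = p ^ v * w \<and> [int w = (-1) ^ v * int (dfac p m)] (mod int p)
     \<and> tt p m = (- int p) ^ v * T
     \<and> (dsum p m \<noteq> p - 1 \<longrightarrow> int p dvd T) \<and> (dsum p m = p - 1 \<longrightarrow> [T = 1] (mod int p))"
proof -
  have p2: "p \<ge> 2" using assms prime_ge_2_nat by blast
  obtain v w where vw: "fact m = p ^ v * w" "(p - 1) * v + dsum p m = m"
    "[int w = (-1) ^ v * int (dfac p m)] (mod int p)" using legendre_mod[OF assms(1)] by blast
  define s where "s = dsum p m"
  have s1: "s \<ge> 1" unfolding s_def using dsum_pos[OF p2, of m] assms(3) by simp
  define T where "T = tau p (monom 1 s * gp p ^ v)"
  have tk: "tt p m = (- int p) ^ v * T"
    unfolding T_def by (rule tt_key[OF assms(1) s1]) (use vw(2) in \<open>simp add: s_def\<close>)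
  have tm: "[T = (\<Sum>j\<in>{s..<p}. coeff (gp p ^ v) (j - s) * (-1) ^ j)] (mod int p)"
    unfolding T_def by (rule tau_mod[OF assms(1) s1])
  have c1: "int p dvd T" if "s \<noteq> p - 1"
  proof (cases "s \<ge> p")
    case True
    then have "{s..<p} = {}" by simp
    then show ?thesis using tm by (simp add: cong_0_iff)
  next
    case False
    then have s2: "s + 2 \<le> p" using that by simp
    have "v mod p = s"
    proof -
      have "p * v = (p - 1) * v + v" using p2 by (cases p) auto
      then have "p * v + s = m + v" using vw(2) unfolding s_def[symmetric] by linarith
      then have "(p * v + s) mod p = (m + v) mod p" by simp
      then have "s mod p = v mod p" using assms(4) by (simp add: mod_add_left_eq[symmetric])
      then show ?thesis using False by simp
    qed
    then have "int p dvd (\<Sum>j\<in>{s..<p}. coeff (gp p ^ v) (j - s) * (-1) ^ j)"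
      by (intro residue[OF assms(1) s1 s2])
    then show ?thesis using tm by (simp add: cong_dvd_iff)
  qed
  have c2: "[T = 1] (mod int p)" if "s = p - 1"
  proof -
    have "{s..<p} = {p - 1}" using that p2 by auto
    moreover have "coeff (gp p) 0 = 1" using p2 by (simp add: coeff_gp)
    moreover have "even (p - 1)" using assms(2) by simp
    ultimately show ?thesis using tm that by (simp add: coeff_0_power)
  qed
  show ?thesis using vw(1,3) tk c1 c2 unfolding s_def by blast
qed



definition Zp :: "nat \<Rightarrow> rat \<Rightarrow> bool" where
  "Zp p x \<longleftrightarrow> (\<exists>a b. \<not> int p dvd b \<and> x = of_int a / of_int b)"

lemma Zp_of_int: "prime p \<Longrightarrow> Zp p (of_int a)"
  unfolding Zp_def by (rule exI[of _ a], rule exI[of _ 1]) (auto simp: prime_gt_1_nat)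

lemma Zp_frac: "\<not> int p dvd b \<Longrightarrow> Zp p (of_int a / of_int b)"
  unfolding Zp_def by blast

lemma Zp_add:
  assumes "prime p" "Zp p x" "Zp p y" shows "Zp p (x + y)"
proof -
  obtain a b c d where x: "\<not> int p dvd b" "x = of_int a / of_int b" and y: "\<not> int p dvd d" "y = of_int c / of_int d"
    using assms unfolding Zp_def by blast
  have b0: "b \<noteq> 0" "d \<noteq> 0" using x y by auto
  have "x + y = of_int (a * d + c * b) / of_int (b * d)" using b0 x y by (simp add: field_simps)
  moreover have "\<not> int p dvd b * d" using x y assms(1) by (simp add: prime_dvd_mult_iff)
  ultimately show ?thesis unfolding Zp_def by blast
qed

lemma Zp_mult:
  assumes "prime p" "Zp p x" "Zp p y" shows "Zp p (x * y)"
proof -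
  obtain a b c d where x: "\<not> int p dvd b" "x = of_int a / of_int b" and y: "\<not> int p dvd d" "y = of_int c / of_int d"
    using assms unfolding Zp_def by blast
  have "x * y = of_int (a * c) / of_int (b * d)" using x y by simp
  moreover have "\<not> int p dvd b * d" using x y assms(1) by (simp add: prime_dvd_mult_iff)
  ultimately show ?thesis unfolding Zp_def by blast
qed

lemma Zp_uminus: "Zp p x \<Longrightarrow> Zp p (- x)"
  unfolding Zp_def by (metis minus_divide_left of_int_minus)

lemma Zp_diff: "prime p \<Longrightarrow> Zp p x \<Longrightarrow> Zp p y \<Longrightarrow> Zp p (x - y)"
  using Zp_add[of p x "- y"] Zp_uminus[of p y] by simp

lemma Zp_sum: "prime p \<Longrightarrow> (\<And>i. i \<in> A \<Longrightarrow> Zp p (f i)) \<Longrightarrow> Zp p (\<Sum>i\<in>A. f i)"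
  by (induction A rule: infinite_finite_induct) (auto intro: Zp_add Zp_of_int[where a=0, simplified])

lemma Zp_p_integral:
  assumes "prime p" "Zp p x" shows "p_integral p x"
proof -
  obtain a b where ab: "\<not> int p dvd b" "x = of_int a / of_int b" using assms unfolding Zp_def by blast
  obtain n d where nd: "quotient_of x = (n, d)" by (cases "quotient_of x")
  have d0: "d > 0" using quotient_of_denom_pos[OF nd] .
  have cop: "coprime n d" using quotient_of_coprime[OF nd] .
  have xnd: "x = of_int n / of_int d" using quotient_of_div[OF nd] .
  have b0: "b \<noteq> 0" using ab by auto
  have "of_int a / of_int b = (of_int n / of_int d :: rat)" using ab xnd by simp
  then have "a * d = n * b" using b0 d0 by (simp add: frac_eq_eq flip: of_int_mult)
  then have "d dvd n * b" by (metis dvd_triv_right)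
  then have "d dvd b" using cop by (metis coprime_commute coprime_dvd_mult_right_iff)
  then have "\<not> int p dvd d" using ab(1) by (meson dvd_trans)
  then show ?thesis unfolding p_integral_def nd by simp
qed



lemma tt_binom: "tt p m = (\<Sum>i\<le>m. if p dvd i then int (m choose i) * (-1) ^ (m - i) else 0)"
proof -
  have deg: "degree (Uq ^ m) = m" unfolding Uq_def using degree_linear_power[of "-1" m] by simp
  show ?thesis unfolding tt_def sig_def deg
    by (intro sum.cong refl) (auto simp: Uq_def coeff_linear_poly_power)
qed

definition GG :: "nat \<Rightarrow> rat fps" where "GG p = exp_p p * exp_p_neg p"

lemma GG_coeff:
  "GG p $ m = (if p dvd m then of_int (tt p m) / fact m else 0)"
proof -
  have "GG p $ m = (\<Sum>i=0..m. (if p dvd i then 1 / fact i else 0) *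
        (if p dvd (m - i) then (-1) ^ (m - i) / fact (m - i) else 0))"
    unfolding GG_def fps_mult_nth exp_p_def exp_p_neg_def by simp
  also have "\<dots> = (\<Sum>i\<le>m. if p dvd m then (if p dvd i then of_int (int (m choose i) * (-1) ^ (m - i)) / fact m else 0) else 0)"
    unfolding atLeast0AtMost
  proof (intro sum.cong refl)
    fix i assume "i \<in> {..m}"
    then have im: "i \<le> m" by simp
    show "(if p dvd i then 1 / fact i else 0) * (if p dvd (m - i) then (-1) ^ (m - i) / fact (m - i) else 0) =
      (if p dvd m then (if p dvd i then of_int (int (m choose i) * (-1) ^ (m - i)) / fact m else 0) else 0 :: rat)"
    proof (cases "p dvd m")
      case True
      then have iff: "p dvd (m - i) \<longleftrightarrow> p dvd i" using im
        by (metis dvd_diff_nat diff_diff_cancel)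
      have "of_nat (m choose i) = (fact m / (fact i * fact (m - i)) :: rat)"
        by (rule binomial_fact[OF im])
      then show ?thesis using True iff by (simp add: field_simps)
    next
      case False
      have "\<not> (p dvd i \<and> p dvd (m - i))" using False im
        by (metis dvd_add le_add_diff_inverse)
      then show ?thesis using False by auto
    qed
  qed
  also have "\<dots> = (if p dvd m then of_int (tt p m) / fact m else 0)"
  proof (cases "p dvd m")
    case True
    have "(\<Sum>i\<le>m. (if p dvd i then of_int (int (m choose i) * (-1) ^ (m - i)) / fact m else 0))
       = (\<Sum>i\<le>m. (if p dvd i then of_int (int (m choose i) * (-1) ^ (m - i)) else 0) / (fact m :: rat))"
      by (intro sum.cong) auto
    also have "\<dots> = of_int (tt p m) / fact m"
      unfolding tt_binom sum_divide_distrib[symmetric] of_int_sum by (simp add: if_distrib cong: if_cong)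
    finally show ?thesis using True by simp
  qed simp
  finally show ?thesis .
qed

definition KK :: "nat \<Rightarrow> nat \<Rightarrow> rat" where
  "KK p m = (if m = 0 then 1 else if p dvd m \<and> dsum p m = p - 1 then 1 / of_nat (dfac p m) else 0)"

lemma GG_props:
  assumes "prime p" "odd p"
  shows "Zp p (GG p $ m) \<and> Zp p ((GG p $ m - KK p m) / of_nat p)"
proof -
  have p2: "p \<ge> 2" using assms prime_ge_2_nat by blast
  have Zp0: "Zp p 0" using Zp_of_int[OF assms(1), of 0] by simp
  consider "m = 0" | "\<not> p dvd m" | "m \<ge> 1" "p dvd m" by (cases m) auto
  then show ?thesis
  proof cases
    case 1
    then have "GG p $ m = 1" "KK p m = 1" by (simp_all add: GG_coeff tt_0 KK_def)
    then show ?thesis using Zp_of_int[OF assms(1), of 1] Zp0 by simp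
  next
    case 2
    then have "m \<noteq> 0" by (metis dvd_0_right)
    then have "GG p $ m = 0" "KK p m = 0" using 2 by (auto simp: GG_coeff KK_def)
    then show ?thesis using Zp0 by simp
  next
    case 3
    obtain v w T where vw: "fact m = p ^ v * w" "[int w = (-1) ^ v * int (dfac p m)] (mod int p)"
      "tt p m = (- int p) ^ v * T" "dsum p m \<noteq> p - 1 \<longrightarrow> int p dvd T"
      "dsum p m = p - 1 \<longrightarrow> [T = 1] (mod int p)"
      using tt_main[OF assms 3] by blast
    have nD: "\<not> int p dvd int (dfac p m)" using prime_not_dvd_dfac[OF assms(1)] int_dvd_int_iff by blast
    have nw: "\<not> int p dvd int w"
    proof
      assume "int p dvd int w"
      then have "int p dvd (-1) ^ v * int (dfac p m)" using vw(2) cong_dvd_iff by blast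
      then have "int p dvd int (dfac p m)" by (simp add: minus_one_power_iff split: if_splits)
      then show False using nD by blast
    qed
    have pv0: "(of_nat p :: rat) ^ v \<noteq> 0" using p2 by simp
    have G: "GG p $ m = of_int ((-1) ^ v * T) / of_int (int w)"
    proof -
      have "GG p $ m = of_int (tt p m) / of_nat (fact m)" using 3 by (simp add: GG_coeff)
      also have "\<dots> = of_int ((- int p) ^ v * T) / (of_nat (p ^ v * w) :: rat)"
        using vw(1,3) by (simp only:)
      also have "\<dots> = (of_nat p) ^ v * of_int ((-1) ^ v * T) / ((of_nat p) ^ v * of_int (int w))"
        by (simp only: power_minus[of "int p"] of_int_mult of_int_power of_nat_mult of_nat_power of_int_of_nat_eq mult_ac)
      also have "\<dots> = of_int ((-1) ^ v * T) / of_int (int w)" using pv0 by (rule mult_divide_mult_cancel_left)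
      finally show ?thesis .
    qed
    have Z1: "Zp p (GG p $ m)" unfolding G by (rule Zp_frac[OF nw])
    have Z2: "Zp p ((GG p $ m - KK p m) / of_nat p)"
    proof (cases "dsum p m = p - 1")
      case False
      then obtain T' where T': "T = int p * T'" using vw(4) by blast
      have "KK p m = 0" using False 3 by (simp add: KK_def)
      have p0: "(of_nat p :: rat) \<noteq> 0" using p2 by simp
      have "(GG p $ m - KK p m) / of_nat p = (of_nat p * of_int ((-1) ^ v * T')) / of_int (int w) / of_nat p"
        unfolding G T' \<open>KK p m = 0\<close> by (simp only: diff_zero of_int_mult of_int_of_nat_eq mult_ac)
      also have "\<dots> = of_int ((-1) ^ v * T') / of_int (int w)" using p0 by simp
      finally have eq: "(GG p $ m - KK p m) / of_nat p = of_int ((-1) ^ v * T') / of_int (int w)" .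
      show ?thesis unfolding eq by (rule Zp_frac[OF nw])
    next
      case True
      define D where "D = int (dfac p m)"
      have D0: "D \<noteq> 0" using nD unfolding D_def by (metis dvd_0_right)
      have w0: "int w \<noteq> 0" using nw by (metis dvd_0_right)
      have K: "KK p m = 1 / of_int D" using True 3 by (simp add: KK_def D_def)
      have "[(-1) ^ v * T * D - int w = (-1) ^ v * 1 * D - (-1) ^ v * D] (mod int p)"
        using vw(2,5) True unfolding D_def by (intro cong_diff cong_mult cong_refl) auto
      then have "int p dvd (-1) ^ v * T * D - int w" by (simp add: cong_0_iff)
      then obtain c where c: "(-1) ^ v * T * D - int w = int p * c" by blast
      have "GG p $ m - KK p m = of_int ((-1) ^ v * T * D - int w) / of_int (int w * D)"
      proof -
        have "GG p $ m - KK p m = (of_int ((-1) ^ v * T) * of_int D - 1 * of_int (int w)) / (of_int (int w) * of_int D)"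
          unfolding G K using D0 w0 by (intro diff_frac_eq) auto
        then show ?thesis by (simp only: of_int_mult of_int_diff mult_1)
      qed
      also have "\<dots> = of_nat p * of_int c / of_int (int w * D)"
        unfolding c by (simp only: of_int_mult of_int_of_nat_eq)
      finally have "(GG p $ m - KK p m) / of_nat p = of_int c / of_int (int w * D)"
        using p2 by simp
      moreover have "\<not> int p dvd int w * D" using nw nD assms(1) unfolding D_def
        by (simp add: prime_dvd_mult_iff)
      ultimately show ?thesis using Zp_frac by metis
    qed
    show ?thesis using Z1 Z2 by blast
  qed
qed



lemma dsum_pow: "p \<ge> 2 \<Longrightarrow> dsum p (p ^ i) = 1"
  using dsum_pow_mult[of p i 1] dsum_rec[of p 1] by simp

lemma I_finite: "p \<ge> 2 \<Longrightarrow> {i. 1 \<le> i \<and> p ^ i \<le> n} \<subseteq> {..n}"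
proof
  fix i assume p2: "p \<ge> 2" and "i \<in> {i. 1 \<le> i \<and> p ^ i \<le> n}"
  then have "p ^ i \<le> n" by simp
  moreover have "i < p ^ i"
  proof -
    have "i < 2 ^ i" by (rule less_exp)
    also have "(2::nat) ^ i \<le> p ^ i" using p2 by (intro power_mono) auto
    finally show ?thesis .
  qed
  ultimately show "i \<in> {..n}" by simp
qed

lemma digit_sum_K:
  assumes "prime p" "odd p"
  shows "Zp p (((\<Sum>i\<in>{i. 1 \<le> i \<and> p ^ i \<le> n}. KK p (n - p ^ i)) - (if n = p then 1 else 0)) / of_nat p)"
proof -
  have p2: "p \<ge> 2" using assms prime_ge_2_nat by blast
  define I where "I = {i. 1 \<le> i \<and> p ^ i \<le> n}"
  have finI: "finite I" unfolding I_def using I_finite[OF p2] finite_subset by blast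
  have Zp0: "Zp p 0" using Zp_of_int[OF assms(1), of 0] by simp
  have dvdi: "p dvd p ^ i" if "i \<in> I" for i using that unfolding I_def by (simp add: dvd_power)
  consider "\<not> p dvd n" | "n = 0" | "p dvd n" "n > 0" by blast
  then show ?thesis
  proof cases
    case 1
    have "KK p (n - p ^ i) = 0" if "i \<in> I" for i
    proof -
      have le: "p ^ i \<le> n" using that unfolding I_def by simp
      have "\<not> p dvd (n - p ^ i)"
      proof
        assume "p dvd (n - p ^ i)"
        then have "p dvd (n - p ^ i + p ^ i)" using dvdi[OF that] by simp
        then show False using 1 le by simp
      qed
      moreover have "n - p ^ i \<noteq> 0" using dvdi[OF that] 1 le by (metis diff_is_0_eq le_antisym)
      ultimately show ?thesis by (simp add: KK_def)
    qed
    moreover have "n \<noteq> p" using 1 by auto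
    ultimately show ?thesis unfolding I_def[symmetric] using Zp0 by simp
  next
    case 2
    then have "I = {}" unfolding I_def using p2 by auto
    then show ?thesis unfolding I_def[symmetric] using 2 Zp0 p2 by auto
  next
    case 3
    define s where "s = dsum p n"
    have s1: "s \<ge> 1" unfolding s_def using dsum_pos[OF p2, of n] 3 by simp
    show ?thesis
    proof (cases "s = 1")
      case True
      obtain j where j: "n = p ^ j" using dsum_eq1[OF p2] True unfolding s_def by blast
      have j1: "j \<ge> 1" using 3 j p2 by (cases j) (auto simp: dvd_imp_le)
      have Ij: "I = {1..j}" unfolding I_def j using p2 by (auto simp: power_increasing_iff)
      define F where "F = (fact (p - 1) :: nat)"
      have Kv: "KK p (n - p ^ i) = (if i = j then 1 else if Suc i = j then 1 / of_nat F else 0)"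
        if "i \<in> {1..j}" for i
      proof -
        have ij: "1 \<le> i" "i \<le> j" using that by auto
        show ?thesis
        proof (cases "i = j")
          case True then show ?thesis unfolding j KK_def by simp
        next
          case False
          then have lt: "i < j" using ij by simp
          have ne: "n - p ^ i \<noteq> 0" using lt p2 unfolding j by (simp add: power_strict_increasing_iff)
          have dv: "p dvd (n - p ^ i)" unfolding j using ij lt
            by (metis dvd_diff_nat dvd_power le_less_trans less_one not_le)
          have ds: "dsum p (n - p ^ i) = (j - i) * (p - 1)" unfolding j by (rule dsum_powdiff[OF p2]) (use lt in simp)
          show ?thesis
          proof (cases "Suc i = j")
            case True
            have "dfac p (n - p ^ i) = F" unfolding j F_def True[symmetric] by (rule dfac_powdiff1[OF p2])
            moreover have "j - i = 1" using True by linarith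
            then have "dsum p (n - p ^ i) = p - 1" using ds by simp
            ultimately show ?thesis using ne dv True False unfolding KK_def by simp
          next
            case False2: False
            then have "j - i \<ge> 2" using lt by simp
            then have "(j - i) * (p - 1) \<ge> 2 * (p - 1)" by simp
            then have "dsum p (n - p ^ i) \<noteq> p - 1" using ds p2 by simp
            then show ?thesis using ne False False2 unfolding KK_def by simp
          qed
        qed
      qed
      have sumv: "(\<Sum>i\<in>I. KK p (n - p ^ i)) = 1 + (if j \<ge> 2 then 1 / of_nat F else 0)"
      proof -
        have "(\<Sum>i\<in>I. KK p (n - p ^ i)) = (\<Sum>i\<in>{1..j}. (if i = j then 1 else if Suc i = j then 1 / of_nat F else 0))"
          unfolding Ij by (intro sum.cong refl Kv)
        also have "\<dots> = (\<Sum>i\<in>{1..j}. (if i = j then 1 else 0)) + (\<Sum>i\<in>{1..j}. (if i = j - 1 then 1 / of_nat F else 0))"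
          by (subst sum.distrib[symmetric], intro sum.cong refl) auto
        also have "\<dots> = 1 + (if j \<ge> 2 then 1 / of_nat F else 0)"
          using j1 by (simp add: sum.delta') linarith
        finally show ?thesis .
      qed
      show ?thesis
      proof (cases "j \<ge> 2")
        case False
        then have "j = 1" using j1 by simp
        then show ?thesis using sumv Zp0 j unfolding I_def[symmetric] by simp
      next
        case True
        have np: "n \<noteq> p" unfolding j using True p2 power_inject_exp[of p j 1] by auto
        have "[int F = -1] (mod int p)" unfolding F_def using wilson_theorem[OF assms(1)] by simp
        then have "int p dvd int F + 1" by (simp add: cong_iff_dvd_diff cong_sym_eq)
        then obtain c where c: "int F + 1 = int p * c" by blast
        have F0: "(of_nat F :: rat) \<noteq> 0" unfolding F_def by simp
        have nF: "\<not> int p dvd int F"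
        proof
          assume "int p dvd int F"
          then have "p dvd F" by simp
          then show False unfolding F_def using assms(1) p2 by (simp add: prime_dvd_fact_iff)
        qed
        have "(1 + 1 / of_nat F) = (of_int (int F + 1) / of_nat F :: rat)"
          using F0 by (simp add: field_simps)
        then have "((\<Sum>i\<in>I. KK p (n - p ^ i)) - (if n = p then 1 else 0)) / of_nat p = of_int c / of_int (int F)"
          unfolding sumv c using True np p2 by (simp add: field_simps)
        then show ?thesis unfolding I_def[symmetric] using Zp_frac[OF nF] by simp
      qed
    next
      case False
      then have s2: "s \<ge> 2" using s1 by simp
      have np: "n \<noteq> p" using False unfolding s_def using dsum_pow[OF p2, of 1] by auto
      define D where "D = dfac p n"
      have Kv: "KK p (n - p ^ i) = (if s = p then of_nat (digit p i n) / of_nat D else 0)" if "i \<in> I" for i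
      proof -
        have le: "p ^ i \<le> n" using that unfolding I_def by simp
        have ne: "n - p ^ i \<noteq> 0"
        proof
          assume "n - p ^ i = 0"
          then have "n = p ^ i" using le by simp
          then show False using False dsum_pow[OF p2] unfolding s_def by simp
        qed
        have dv: "p dvd (n - p ^ i)" using 3 dvdi[OF that] by (simp add: dvd_diff_nat)
        note sp = subpow_digits[OF p2 le]
        show ?thesis
        proof (cases "digit p i n = 0")
          case True
          then have "dsum p (n - p ^ i) \<noteq> p - 1" using sp s2 unfolding s_def by auto
          then show ?thesis using True ne unfolding KK_def by simp
        next
          case dnz: False
          then have e1: "dsum p (n - p ^ i) + 1 = s" and e2: "D = digit p i n * dfac p (n - p ^ i)"
            using sp unfolding s_def D_def by auto
          have Dpos: "dfac p (n - p ^ i) \<noteq> 0"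
            using prime_not_dvd_dfac[OF assms(1), of "n - p ^ i"] by (metis dvd_0_right)
          show ?thesis
          proof (cases "s = p")
            case True
            then have "dsum p (n - p ^ i) = p - 1" using e1 by simp
            then show ?thesis using ne dv True e2 dnz Dpos unfolding KK_def by simp
          next
            case False
            then have "dsum p (n - p ^ i) \<noteq> p - 1" using e1 p2 by auto
            then show ?thesis using ne False unfolding KK_def by simp
          qed
        qed
      qed
      show ?thesis
      proof (cases "s = p")
        case False
        then have "(\<Sum>i\<in>I. KK p (n - p ^ i)) = 0" using Kv by simp
        then show ?thesis using np Zp0 unfolding I_def[symmetric] by simp
      next
        case True
        have sd: "(\<Sum>i\<in>I. digit p i n) = s"
        proof -
          have lt: "n < p ^ (n + 1)"
          proof -
            have "n < 2 ^ n" by (rule less_exp)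
            also have "(2::nat) ^ n \<le> p ^ n" using p2 by (intro power_mono) auto
            also have "p ^ n \<le> p ^ (n + 1)" using p2 by (intro power_increasing) auto
            finally show ?thesis .
          qed
          have "s = (\<Sum>i<n + 1. digit p i n)" unfolding s_def by (rule dsum_sum_digits[OF p2 lt])
          also have "\<dots> = (\<Sum>i\<in>I. digit p i n)"
          proof (rule sum.mono_neutral_right)
            show "I \<subseteq> {..<n + 1}" unfolding I_def using I_finite[OF p2, of n] by auto
            show "\<forall>i\<in>{..<n + 1} - I. digit p i n = 0"
            proof
              fix i assume "i \<in> {..<n + 1} - I"
              then have "i = 0 \<or> \<not> p ^ i \<le> n" unfolding I_def by auto
              then show "digit p i n = 0"
              proof
                assume "i = 0" then show ?thesis using 3 by (simp add: digit_def)
              next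
                assume "\<not> p ^ i \<le> n" then show ?thesis using digit_nz_le by blast
              qed
            qed
          qed simp
          finally show ?thesis by simp
        qed
        have D0: "\<not> int p dvd int D" unfolding D_def using prime_not_dvd_dfac[OF assms(1)] int_dvd_int_iff by blast
        have "(\<Sum>i\<in>I. KK p (n - p ^ i)) = (\<Sum>i\<in>I. of_nat (digit p i n) / of_nat D)"
          using Kv True by simp
        also have "\<dots> = of_nat p / of_nat D"
          using sd True by (simp add: sum_divide_distrib[symmetric] flip: of_nat_sum)
        finally have eq: "((\<Sum>i\<in>I. KK p (n - p ^ i)) - (if n = p then 1 else 0)) / of_nat p = of_int 1 / of_int (int D)"
          using np p2 by simp
        show ?thesis unfolding I_def[symmetric] eq by (rule Zp_frac[OF D0])
      qed
    qed
  qed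
qed



lemma F_coeff:
  assumes "p \<ge> 2"
  shows "(GG p * pow_series p) $ n = (\<Sum>i\<in>{i. 1 \<le> i \<and> p ^ i \<le> n}. GG p $ (n - p ^ i))"
proof -
  define I where "I = {i. 1 \<le> i \<and> p ^ i \<le> n}"
  have finI: "finite I" unfolding I_def using I_finite[OF assms] finite_subset by blast
  have "(GG p * pow_series p) $ n = (\<Sum>j=0..n. GG p $ j * (if \<exists>i\<ge>1. n - j = p ^ i then 1 else 0))"
    unfolding fps_mult_nth pow_series_def by simp
  also have "\<dots> = (\<Sum>j\<in>{j\<in>{0..n}. \<exists>i\<ge>1. n - j = p ^ i}. GG p $ j)"
    by (simp add: sum.inter_filter[symmetric] if_distrib cong: if_cong)
  also have "{j\<in>{0..n}. \<exists>i\<ge>1. n - j = p ^ i} = (\<lambda>i. n - p ^ i) ` I"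
  proof (rule equalityI; rule subsetI)
    fix j assume "j \<in> {j\<in>{0..n}. \<exists>i\<ge>1. n - j = p ^ i}"
    then obtain i where "i \<ge> 1" "n - j = p ^ i" "j \<le> n" by auto
    then show "j \<in> (\<lambda>i. n - p ^ i) ` I" unfolding I_def by (auto intro!: image_eqI[of _ _ i])
  next
    fix j assume "j \<in> (\<lambda>i. n - p ^ i) ` I"
    then obtain i where "i \<ge> 1" "p ^ i \<le> n" "j = n - p ^ i" unfolding I_def by auto
    then show "j \<in> {j\<in>{0..n}. \<exists>i\<ge>1. n - j = p ^ i}" by auto
  qed
  also have "(\<Sum>j\<in>(\<lambda>i. n - p ^ i) ` I. GG p $ j) = (\<Sum>i\<in>I. GG p $ (n - p ^ i))"
  proof (rule sum.reindex_cong[OF _ refl refl])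
    show "inj_on (\<lambda>i. n - p ^ i) I"
    proof
      fix x y assume "x \<in> I" "y \<in> I" "n - p ^ x = n - p ^ y"
      then have "p ^ x = p ^ y" unfolding I_def by auto
      then show "x = y" using assms power_inject_exp[of p x y] by simp
    qed
  qed
  finally show ?thesis unfolding I_def .
qed

theorem proposition1p3:
  fixes p :: nat
  assumes "prime p" and "odd p"
  defines "F \<equiv> exp_p p * exp_p_neg p * pow_series p"
  shows "(\<forall>n. p_integral p (fps_nth F n))
       \<and> (\<forall>n. p_integral p ((fps_nth F n - fps_nth (fps_X ^ p) n) / of_nat p))"
proof -
  have p2: "p \<ge> 2" using assms prime_ge_2_nat by blast
  have FG: "F = GG p * pow_series p" unfolding F_def GG_def ..
  define I where "I = (\<lambda>n::nat. {i. 1 \<le> i \<and> p ^ i \<le> n})"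
  have Fn: "F $ n = (\<Sum>i\<in>I n. GG p $ (n - p ^ i))" for n
    unfolding FG I_def by (rule F_coeff[OF p2])
  have A: "p_integral p (F $ n)" for n
    unfolding Fn by (intro Zp_p_integral[OF assms(1)] Zp_sum[OF assms(1)]) (use GG_props[OF assms(1,2)] in blast)
  have B: "p_integral p ((F $ n - (fps_X ^ p) $ n) / of_nat p)" for n
  proof -
    define G where "G = (\<Sum>i\<in>I n. GG p $ (n - p ^ i))"
    define K where "K = (\<Sum>i\<in>I n. KK p (n - p ^ i))"
    define c where "c = (if n = p then 1 else 0 :: rat)"
    have e0: "(F $ n - (fps_X ^ p) $ n) / of_nat p = (G - c) / of_nat p"
      unfolding Fn fps_X_power_nth G_def c_def ..
    have e1: "(\<Sum>i\<in>I n. (GG p $ (n - p ^ i) - KK p (n - p ^ i)) / of_nat p) = (G - K) / of_nat p"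
      unfolding G_def K_def by (simp only: sum_divide_distrib[symmetric] sum_subtractf)
    have e2: "(G - K) / of_nat p + (K - c) / of_nat p = (G - c) / of_nat p"
      by (simp add: add_divide_distrib[symmetric])
    have Z1: "Zp p ((G - K) / of_nat p)"
      unfolding e1[symmetric] by (intro Zp_sum[OF assms(1)]) (use GG_props[OF assms(1,2)] in blast)
    have Z2: "Zp p ((K - c) / of_nat p)"
      unfolding I_def K_def c_def by (rule digit_sum_K[OF assms(1,2)])
    show ?thesis unfolding e0 e2[symmetric] by (intro Zp_p_integral[OF assms(1)] Zp_add[OF assms(1)] Z1 Z2)
  qed
  show ?thesis using A B by blast
qed


end
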